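(* In the situation of a directed cycle $a_1\to b_1\to\cdots\to a_p\to b_p\to a_{p+1}=a_1$ in $\Gamma^M$ as described in the context, assume in addition that $M$ is the prefix matching generated by a diagonal matching rule $F$. Then $d_i=c_i+1$ for all $i$.
   Context: $G$ is a finite simple connected graph with distance $d$; $\ell(x_0,\dots,x_k)=\sum_{i=0}^{k-1}d(x_i,x_{i+1})$; sequences are elements of $I_{k,l}(G)=\{(x_0,\dots,x_k)\in V(G)^{k+1}:x_i\ne x_{i+1}\ \forall i,\ \ell=l\}$. $\Gamma$ is the directed graph on sequences with an edge $a\to b$ whenever $b$ is obtained from $a=(x_0,\dots,x_k)$ by deleting some $x_i$, $1\le i\le k-1$, with $\ell(b)=\ell(a)$. A matching is a set of pairwise vertex-disjoint edges of $\Gamma$; $\Gamma^M$ is $\Gamma$ with edges of $M$ reversed. Matching states: "unmatched", "insert$(i,v)$" (matched to $(x_0,\dots,x_i,v,x_{i+1},\dots,x_k)$), "delete$(i)$" (matched to $(x_0,\dots,\hat x_i,\dots,x_k)$). A prefix matching: whenever $(x_0,\dots,x_k)$ has state insert$(i,v)$ (resp. delete$(i)$), every sequence $(x_0,\dots,x_{i+1},y_{i+2},\dots,y_{k'})$ has the same state. A matching rule is a function $F$ from sequences to $\{\epsilon\}\cup\{\iota(v):v\in V(G)\}\cup\{\delta\}$; a prefix matching $M$ is generated by $F$ if for every sequence $(x_0,\dots,x_k)$, $k\ge1$, with unmatched prefix $(x_0,\dots,x_{k-1})$, its state is insert$(k-1,v)$ iff $F(x_0,\dots,x_k)=\iota(v)$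 and delete$(k-1)$ iff $F(x_0,\dots,x_k)=\delta$. $F$ is valid if (1) $F(x_0,\dots,x_k)=\iota(v)$ implies $v\notin\{x_{k-1},x_k\}$, $d(x_{k-1},v)+d(v,x_k)=d(x_{k-1},x_k)$, $F(x_0,\dots,x_{k-1},v)=\epsilon$, $F(x_0,\dots,x_{k-1},v,x_k)=\delta$; (2) $F(x_0,\dots,x_k)=\delta$ implies $d(x_{k-2},x_{k-1})+d(x_{k-1},x_k)=d(x_{k-2},x_k)$ and $F(x_0,\dots,x_{k-2},x_k)=\iota(x_{k-1})$. A valid $F$ is diagonal if, w.r.t. the prefix matching it generates, $F(x_0,\dots,x_k)\ne\epsilon$ for every sequence with unmatched prefix and $d(x_{k-1},x_k)\ge2$. Cycle setting: $a_i\in I_{k,l}(G)$, $b_i\in I_{k-1,l}(G)$, each $a_i\to b_i$ is an edge of $\Gamma$ not in $M$, each $b_i\to a_{i+1}$ is a reversed edge of $M$; $d_i$ is the position of the entry of $a_i$ deleted to obtain $b_i$; $a_{i+1}=(b_{i,0},\dots,b_{i,c_i},u_i,b_{i,c_i+1},\dots,b_{i,k-1})$ where $b_i=(b_{i,0},\dots,b_{i,k-1})$; indices $i$ are taken modulo $p$. *)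

theory Defs
  imports Main
begin

definition simple_graph :: "'v set \<Rightarrow> ('v \<Rightarrow> 'v \<Rightarrow> bool) \<Rightarrow> bool" where
  "simple_graph V E \<longleftrightarrow> finite V \<and> (\<forall>x y. E x y \<longrightarrow> x \<in> V \<and> y \<in> V)
     \<and> (\<forall>x y. E x y \<longrightarrow> E y x) \<and> (\<forall>x. \<not> E x x)"

definition is_walk :: "('v \<Rightarrow> 'v \<Rightarrow> bool) \<Rightarrow> 'v list \<Rightarrow> bool" where
  "is_walk E xs \<longleftrightarrow> xs \<noteq> [] \<and> (\<forall>i. Suc i < length xs \<longrightarrow> E (xs ! i) (xs ! Suc i))"

definition connected_graph :: "'v set \<Rightarrow> ('v \<Rightarrow> 'v \<Rightarrow> bool) \<Rightarrow> bool" where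
  "connected_graph V E \<longleftrightarrow> V \<noteq> {} \<and>
     (\<forall>x\<in>V. \<forall>y\<in>V. \<exists>xs. is_walk E xs \<and> hd xs = x \<and> last xs = y)"

definition gdist :: "('v \<Rightarrow> 'v \<Rightarrow> bool) \<Rightarrow> 'v \<Rightarrow> 'v \<Rightarrow> nat" where
  "gdist E x y = (LEAST n. \<exists>xs. is_walk E xs \<and> hd xs = x \<and> last xs = y \<and> length xs = Suc n)"

text \<open>A sequence (x_0,...,x_k) is the list [x_0,...,x_k]; its length is k+1.\<close>
definition seq_len :: "('v \<Rightarrow> 'v \<Rightarrow> bool) \<Rightarrow> 'v list \<Rightarrow> nat" where
  "seq_len E xs = (\<Sum>i<length xs - 1. gdist E (xs ! i) (xs ! Suc i))"

definition is_seq :: "'v set \<Rightarrow> 'v list \<Rightarrow> bool" where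
  "is_seq V xs \<longleftrightarrow> xs \<noteq> [] \<and> set xs \<subseteq> V \<and> (\<forall>i. Suc i < length xs \<longrightarrow> xs ! i \<noteq> xs ! Suc i)"

definition I_kl :: "'v set \<Rightarrow> ('v \<Rightarrow> 'v \<Rightarrow> bool) \<Rightarrow> nat \<Rightarrow> nat \<Rightarrow> 'v list set" where
  "I_kl V E k l = {xs. is_seq V xs \<and> length xs = Suc k \<and> seq_len E xs = l}"

definition del_at :: "nat \<Rightarrow> 'v list \<Rightarrow> 'v list" where
  "del_at i xs = take i xs @ drop (Suc i) xs"

definition ins_after :: "nat \<Rightarrow> 'v \<Rightarrow> 'v list \<Rightarrow> 'v list" where
  "ins_after i v xs = take (Suc i) xs @ v # drop (Suc i) xs"

definition Gamma_edge :: "'v set \<Rightarrow> ('v \<Rightarrow> 'v \<Rightarrow> bool) \<Rightarrow> 'v list \<Rightarrow> 'v list \<Rightarrow> bool" where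
  "Gamma_edge V E a b \<longleftrightarrow> is_seq V a \<and> is_seq V b \<and>
     (\<exists>i. 1 \<le> i \<and> Suc i < length a \<and> b = del_at i a) \<and> seq_len E b = seq_len E a"

definition is_matching :: "'v set \<Rightarrow> ('v \<Rightarrow> 'v \<Rightarrow> bool) \<Rightarrow> ('v list \<times> 'v list) set \<Rightarrow> bool" where
  "is_matching V E M \<longleftrightarrow> (\<forall>(a, b)\<in>M. Gamma_edge V E a b) \<and>
     (\<forall>e\<in>M. \<forall>e'\<in>M. e \<noteq> e' \<longrightarrow> {fst e, snd e} \<inter> {fst e', snd e'} = {})"

definition unmatched :: "('v list \<times> 'v list) set \<Rightarrow> 'v list \<Rightarrow> bool" where
  "unmatched M x \<longleftrightarrow> (\<forall>(a, b)\<in>M. x \<noteq> a \<and> x \<noteq> b)"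

definition state_ins :: "('v list \<times> 'v list) set \<Rightarrow> 'v list \<Rightarrow> nat \<Rightarrow> 'v \<Rightarrow> bool" where
  "state_ins M x i v \<longleftrightarrow> (ins_after i v x, x) \<in> M"

definition state_del :: "('v list \<times> 'v list) set \<Rightarrow> 'v list \<Rightarrow> nat \<Rightarrow> bool" where
  "state_del M x i \<longleftrightarrow> (x, del_at i x) \<in> M"

definition prefix_matching :: "'v set \<Rightarrow> ('v \<Rightarrow> 'v \<Rightarrow> bool) \<Rightarrow> ('v list \<times> 'v list) set \<Rightarrow> bool" where
  "prefix_matching V E M \<longleftrightarrow> is_matching V E M \<and>
     (\<forall>x i v y. is_seq V x \<and> state_ins M x i v \<and> is_seq V y \<and> i + 2 \<le> length y
        \<and> take (i + 2) y = take (i + 2) x \<longrightarrow> state_ins M y i v) \<and>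
     (\<forall>x i y. is_seq V x \<and> state_del M x i \<and> is_seq V y \<and> i + 2 \<le> length y
        \<and> take (i + 2) y = take (i + 2) x \<longrightarrow> state_del M y i)"

datatype 'v rule_val = Eps | Iota 'v | Delta

text \<open>M is generated by F. For xs = (x_0,...,x_k), k = length xs - 1, and k - 1 = length xs - 2.\<close>
definition generated_by :: "'v set \<Rightarrow> ('v list \<times> 'v list) set \<Rightarrow> ('v list \<Rightarrow> 'v rule_val) \<Rightarrow> bool" where
  "generated_by V M F \<longleftrightarrow>
     (\<forall>xs. is_seq V xs \<and> 2 \<le> length xs \<and> unmatched M (butlast xs) \<longrightarrow>
        (\<forall>v. state_ins M xs (length xs - 2) v \<longleftrightarrow> F xs = Iota v) \<and>
        (state_del M xs (length xs - 2) \<longleftrightarrow> F xs = Delta))"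

definition valid_rule :: "'v set \<Rightarrow> ('v \<Rightarrow> 'v \<Rightarrow> bool) \<Rightarrow> ('v list \<Rightarrow> 'v rule_val) \<Rightarrow> bool" where
  "valid_rule V E F \<longleftrightarrow>
     (\<forall>xs v. is_seq V xs \<and> F xs = Iota v \<longrightarrow> v \<in> V) \<and>
     (\<forall>xs v. is_seq V xs \<and> 2 \<le> length xs \<and> F xs = Iota v \<longrightarrow>
        v \<noteq> xs ! (length xs - 2) \<and> v \<noteq> last xs \<and>
        gdist E (xs ! (length xs - 2)) v + gdist E v (last xs) = gdist E (xs ! (length xs - 2)) (last xs) \<and>
        F (butlast xs @ [v]) = Eps \<and> F (butlast xs @ [v, last xs]) = Delta) \<and>
     (\<forall>xs. is_seq V xs \<and> 2 \<le> length xs \<and> F xs = Delta \<longrightarrow>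
        3 \<le> length xs \<and>
        gdist E (xs ! (length xs - 3)) (xs ! (length xs - 2)) + gdist E (xs ! (length xs - 2)) (last xs)
          = gdist E (xs ! (length xs - 3)) (last xs) \<and>
        F (butlast (butlast xs) @ [last xs]) = Iota (xs ! (length xs - 2)))"

definition diagonal_rule :: "'v set \<Rightarrow> ('v \<Rightarrow> 'v \<Rightarrow> bool) \<Rightarrow> ('v list \<times> 'v list) set \<Rightarrow> ('v list \<Rightarrow> 'v rule_val) \<Rightarrow> bool" where
  "diagonal_rule V E M F \<longleftrightarrow> valid_rule V E F \<and>
     (\<forall>xs. is_seq V xs \<and> 2 \<le> length xs \<and> unmatched M (butlast xs) \<and>
        2 \<le> gdist E (xs ! (length xs - 2)) (last xs) \<longrightarrow> F xs \<noteq> Eps)"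

end

theory Submission
  imports Defs
begin

lemma seq_len_single: "seq_len E [x] = 0" by (simp add: seq_len_def)

lemma seq_len_cons2: "seq_len E (x # y # zs) = gdist E x y + seq_len E (y # zs)"
  unfolding seq_len_def by (simp add: sum.lessThan_Suc_shift del: sum.lessThan_Suc)

lemma seq_len_app: "xs \<noteq> [] \<Longrightarrow> ys \<noteq> [] \<Longrightarrow>
  seq_len E (xs @ ys) = seq_len E xs + gdist E (last xs) (hd ys) + seq_len E ys"
proof (induction xs rule: induct_list012)
  case 1 then show ?case by simp
next
  case (2 x) then show ?case by (cases ys) (simp_all add: seq_len_cons2 seq_len_single)
next
  case (3 x y zs) then show ?case by (simp add: seq_len_cons2)
qed

lemma seq_len_del: assumes "1 \<le> D" "Suc D < length a"
  shows "seq_len E a + gdist E (a!(D-1)) (a!(Suc D)) =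
     seq_len E (del_at D a) + gdist E (a!(D-1)) (a!D) + gdist E (a!D) (a!(Suc D))"
proof -
  define A where "A = take D a"
  define B where "B = drop (Suc D) a"
  have A1: "A \<noteq> []" using assms unfolding A_def by auto
  have "last A = A ! (D - 1)" using A1 assms by (simp add: last_conv_nth A_def min_def)
  hence A: "A \<noteq> []" "last A = a!(D-1)" using A1 assms unfolding A_def by auto
  have B: "B \<noteq> []" "hd B = a!(Suc D)" using assms unfolding B_def
    by (auto simp: hd_drop_conv_nth)
  have a: "a = A @ a!D # B" unfolding A_def B_def using assms by (simp add: id_take_nth_drop)
  have d: "del_at D a = A @ B" unfolding A_def B_def del_at_def by simp
  have "seq_len E a = seq_len E A + gdist E (last A) (a!D) + (gdist E (a!D) (hd B) + seq_len E B)"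
    apply (subst a) using A B by (cases B) (auto simp: seq_len_app seq_len_cons2)
  then show ?thesis using A B d by (simp add: seq_len_app)
qed

lemma gdist_pos: assumes "connected_graph V E" "x \<in> V" "y \<in> V" "x \<noteq> y"
  shows "1 \<le> gdist E x y"
proof (rule ccontr)
  assume "\<not> 1 \<le> gdist E x y"
  hence g: "gdist E x y = 0" by simp
  obtain xs where xs: "is_walk E xs" "hd xs = x" "last xs = y"
    using assms unfolding connected_graph_def by blast
  hence "\<exists>n. \<exists>xs. is_walk E xs \<and> hd xs = x \<and> last xs = y \<and> length xs = Suc n"
    by (intro exI[of _ "length xs - 1"] exI[of _ xs]) (auto simp: is_walk_def)
  from LeastI_ex[OF this] g obtain ws where "is_walk E ws" "hd ws = x" "last ws = y" "length ws = 1"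
    unfolding gdist_def by auto
  then show False using assms(4) by (cases ws) auto
qed


definition has_state where
  "has_state M x s \<longleftrightarrow> state_del M x s \<or> (\<exists>v. state_ins M x s v)"

lemma del_ins: "s < length x \<Longrightarrow> del_at (Suc s) (ins_after s v x) = x"
  unfolding del_at_def ins_after_def by (simp add: min_def)

lemma len_ins: "s < length x \<Longrightarrow> length (ins_after s v x) = Suc (length x)"
  unfolding ins_after_def by auto

lemma nth_ins1: "s < length x \<Longrightarrow> ins_after s v x ! Suc s = v"
  unfolding ins_after_def by (simp add: nth_append)
lemma nth_ins2: "i \<le> s \<Longrightarrow> s < length x \<Longrightarrow> ins_after s v x ! i = x ! i"
  unfolding ins_after_def by (simp add: nth_append)
lemma nth_ins3: "s \<le> i \<Longrightarrow> Suc i < length x \<Longrightarrow> ins_after s v x ! Suc (Suc i) = x ! Suc i"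
  unfolding ins_after_def by (simp add: nth_append)
lemma nth_del1: "i < s \<Longrightarrow> s < length x \<Longrightarrow> del_at s x ! i = x ! i"
  unfolding del_at_def by (simp add: nth_append)
lemma nth_del2: "s \<le> i \<Longrightarrow> Suc i < length x \<Longrightarrow> del_at s x ! i = x ! Suc i"
  unfolding del_at_def by (simp add: nth_append)

lemma ins_del: "1 \<le> i \<Longrightarrow> i < length a \<Longrightarrow> ins_after (i-1) (a!i) (del_at i a) = a"
  unfolding del_at_def ins_after_def
  using id_take_nth_drop[of i a] by (simp add: min_def)

lemma take_del: "n \<le> D \<Longrightarrow> take n (del_at D a) = take n a"
  unfolding del_at_def by (simp add: min_def)

lemma is_seq_take: "is_seq V x \<Longrightarrow> 0 < n \<Longrightarrow> is_seq V (take n x)"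
  unfolding is_seq_def using set_take_subset[of n x] by (auto simp: neq_Nil_conv)

lemma ins_end: assumes "Gamma_edge V E (ins_after s v x) x" "s < length x"
  shows "s + 2 \<le> length x"
proof (rule ccontr)
  assume "\<not> ?thesis"
  hence ie: "ins_after s v x = x @ [v]" using assms(2) unfolding ins_after_def by simp
  obtain i where i: "1 \<le> i" "Suc i < length (x @ [v])" "x = del_at i (x @ [v])"
    and sq: "is_seq V (x @ [v])"
    using assms(1) unfolding Gamma_edge_def ie by blast
  have "x ! i = (x @ [v]) ! Suc i"
    using i(2) arg_cong[OF i(3), of "\<lambda>l. l ! i"] unfolding del_at_def
    by (simp add: nth_append min_def)
  moreover have "(x @ [v]) ! i = x ! i" using i(2) by (simp add: nth_append)
  ultimately show False using sq i(2) unfolding is_seq_def by auto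
qed

lemma del_inj: assumes "is_seq V x" "s < j" "Suc j < length x" "del_at s x = del_at j x"
  shows False
proof -
  have "del_at s x ! s = x ! Suc s" using assms(2,3) by (simp add: nth_del2)
  moreover have "del_at j x ! s = x ! s" using assms(2,3) by (simp add: nth_del1)
  ultimately show False using assms unfolding is_seq_def by auto
qed

lemma ins_inj: assumes "is_seq V (ins_after s v x)" "s < s'" "s' < length x"
  "ins_after s v x = ins_after s' v' x" shows False
proof -
  have 1: "ins_after s v x ! Suc s = v" using assms(2,3) by (simp add: nth_ins1)
  have 2: "ins_after s v x ! Suc (Suc s) = x ! Suc s" using assms(2,3) by (simp add: nth_ins3)
  have 3: "ins_after s' v' x ! Suc s = x ! Suc s" using assms(2,3) by (simp add: nth_ins2)
  have "Suc (Suc s) < length (ins_after s v x)" using assms(2,3) len_ins[of s x v] by simp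
  moreover have "ins_after s v x ! Suc s \<noteq> ins_after s v x ! Suc (Suc s)"
    using assms(1) calculation unfolding is_seq_def by blast
  ultimately show False using 1 2 3 assms(4) by simp
qed

lemma matched_state: assumes "is_matching V E M" "\<not> unmatched M x"
  shows "\<exists>s. s + 2 \<le> length x \<and> has_state M x s"
proof -
  obtain a b where ab: "(a,b) \<in> M" "x = a \<or> x = b" using assms(2) unfolding unmatched_def by auto
  have g: "Gamma_edge V E a b" using assms(1) ab unfolding is_matching_def by auto
  then obtain i where i: "1 \<le> i" "Suc i < length a" "b = del_at i a" unfolding Gamma_edge_def by auto
  show ?thesis
  proof (cases "x = a")
    case True
    then show ?thesis using ab i by (intro exI[of _ i]) (auto simp: has_state_def state_del_def)
  next
    case False
    hence xb: "x = b" using ab by auto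
    have "a = ins_after (i-1) (a!i) x" using ins_del[of i a] i xb by simp
    moreover have "length x = length a - 1" using xb i unfolding del_at_def by (simp add: min_def)
    ultimately have "state_ins M x (i-1) (a!i)" "i - 1 + 2 \<le> length x"
      using ab(1) xb i unfolding state_ins_def by auto
    then show ?thesis unfolding has_state_def by blast
  qed
qed

lemma edge_seq: "is_matching V E M \<Longrightarrow> (a,b) \<in> M \<Longrightarrow> is_seq V a \<and> is_seq V b"
  unfolding is_matching_def Gamma_edge_def by auto

lemma disj: "is_matching V E M \<Longrightarrow> e \<in> M \<Longrightarrow> e' \<in> M \<Longrightarrow> x \<in> {fst e, snd e} \<Longrightarrow> x \<in> {fst e', snd e'} \<Longrightarrow> e = e'"
  unfolding is_matching_def by blast

lemma del_ins_excl: assumes "is_matching V E M" "state_del M x s" "state_ins M x s' v" "s' < length x"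
  shows False
proof -
  have "(x, del_at s x) = (ins_after s' v x, x)"
    by (rule disj[OF assms(1), of "(x, del_at s x)" "(ins_after s' v x, x)" x])
       (use assms in \<open>auto simp: state_del_def state_ins_def\<close>)
  then show False using len_ins[OF assms(4)] by (metis n_not_Suc_n prod.inject)
qed

lemma state_unique: assumes "is_matching V E M" "is_seq V x" "has_state M x s" "has_state M x s'"
  "s + 2 \<le> length x" "s' + 2 \<le> length x" shows "s = s'"
proof (rule ccontr)
  assume ne: "s \<noteq> s'"
  have *: "\<And>s s'. s < s' \<Longrightarrow> has_state M x s \<Longrightarrow> has_state M x s' \<Longrightarrow> s' + 2 \<le> length x \<Longrightarrow> False"
  proof -
    fix s s' assume lt: "s < s'" "has_state M x s" "has_state M x s'" "s' + 2 \<le> length x"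
    have False
    proof (cases "state_del M x s")
      case True
      show False
      proof (cases "state_del M x s'")
        case True
        have "(x, del_at s x) = (x, del_at s' x)"
          by (rule disj[OF assms(1), of "(x, del_at s x)" "(x, del_at s' x)" x])
             (use \<open>state_del M x s\<close> True in \<open>auto simp: state_del_def\<close>)
        then show False using del_inj[OF assms(2) lt(1)] lt by auto
      next
        case False
        then obtain v where vv: "state_ins M x s' v" using lt(3) unfolding has_state_def by auto
        show False by (rule del_ins_excl[OF assms(1) True vv]) (use lt in simp)
      qed
    next
      case False
      then obtain v where v: "state_ins M x s v" using lt(2) unfolding has_state_def by auto
      show False
      proof (cases "state_del M x s'")
        case True
        then show False using del_ins_excl[OF assms(1) True v] lt by auto
      next
        case False
        then obtain v' where v': "state_ins M x s' v'" using lt(3) unfolding has_state_def by auto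
        have e: "(ins_after s v x, x) = (ins_after s' v' x, x)"
          by (rule disj[OF assms(1), of "(ins_after s v x, x)" "(ins_after s' v' x, x)" x])
             (use v v' in \<open>auto simp: state_ins_def\<close>)
        have "is_seq V (ins_after s v x)" using edge_seq[OF assms(1)] v unfolding state_ins_def by auto
        then show False using ins_inj[of V s v x s' v'] e lt by auto
      qed
    qed
    then show False .
  qed
  show False
  proof (cases "s < s'")
    case True then show False using * assms by blast
  next
    case False then have "s' < s" using ne by simp
    then show False using * assms by blast
  qed
qed

lemma prefix_state: assumes "prefix_matching V E M" "is_seq V x" "has_state M x s" "is_seq V y"
  "s + 2 \<le> length y" "take (s+2) y = take (s+2) x" shows "has_state M y s"
proof -
  have P: "\<forall>x i v y. is_seq V x \<and> state_ins M x i v \<and> is_seq V y \<and> i + 2 \<le> length y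
        \<and> take (i + 2) y = take (i + 2) x \<longrightarrow> state_ins M y i v"
   "\<forall>x i y. is_seq V x \<and> state_del M x i \<and> is_seq V y \<and> i + 2 \<le> length y
        \<and> take (i + 2) y = take (i + 2) x \<longrightarrow> state_del M y i"
    using assms(1) unfolding prefix_matching_def by blast+
  show ?thesis
  proof (cases "state_del M x s")
    case True then show ?thesis using P(2)[rule_format, of x s y] assms by (auto simp: has_state_def)
  next
    case False then obtain v where "state_ins M x s v" using assms(3) unfolding has_state_def by blast
    then show ?thesis using P(1)[rule_format, of x s v y] assms by (auto simp: has_state_def)
  qed
qed

lemma first_prefix: assumes "prefix_matching V E M" "is_seq V x" "has_state M x s" "s + 2 \<le> length x"
  "\<not> unmatched M (take n x)" shows "s + 2 \<le> n"
proof -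
  have m: "is_matching V E M" using assms(1) prefix_matching_def by auto
  obtain s' where s': "s' + 2 \<le> length (take n x)" "has_state M (take n x) s'"
    using matched_state[OF m assms(5)] by auto
  have "is_seq V (take n x)" using is_seq_take[OF assms(2)] s' by auto
  moreover have "take (s'+2) x = take (s'+2) (take n x)" using s' by (simp add: min_absorb1)
  ultimately have "has_state M x s'" using prefix_state[OF assms(1) _ s'(2) assms(2)] s' by auto
  hence "s = s'" using state_unique[OF m assms(2) assms(3) _ assms(4)] s' by auto
  then show ?thesis using s' by auto
qed

lemma F_matched: assumes "generated_by V M F" "is_seq V xs" "2 \<le> length xs" "unmatched M (butlast xs)"
  "F xs \<noteq> Eps" shows "\<not> unmatched M xs"
proof (cases "F xs")
  case Eps then show ?thesis using assms by simp
next
  case (Iota v)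
  then have "state_ins M xs (length xs - 2) v" using assms unfolding generated_by_def by (meson)
  then show ?thesis unfolding state_ins_def unmatched_def by auto
next
  case Delta
  then have "state_del M xs (length xs - 2)" using assms unfolding generated_by_def by (meson)
  then show ?thesis unfolding state_del_def unmatched_def by auto
qed


theorem lemma3p7:
  fixes V :: "'v set" and E :: "'v \<Rightarrow> 'v \<Rightarrow> bool"
    and M :: "('v list \<times> 'v list) set" and F :: "'v list \<Rightarrow> 'v rule_val"
    and p k l :: nat and a b :: "nat \<Rightarrow> 'v list" and d c :: "nat \<Rightarrow> nat" and u :: "nat \<Rightarrow> 'v"
  assumes "simple_graph V E" and "connected_graph V E"
    and "prefix_matching V E M" and "generated_by V M F" and "diagonal_rule V E M F"
    and "1 \<le> p"
    and "\<forall>i<p. a i \<in> I_kl V E k l \<and> b i \<in> I_kl V E (k - 1) l"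
    and "\<forall>i<p. Gamma_edge V E (a i) (b i) \<and> (a i, b i) \<notin> M"
    and "\<forall>i<p. (a (Suc i mod p), b i) \<in> M"
    and "\<forall>i<p. 1 \<le> d i \<and> d i + 1 \<le> k \<and> b i = del_at (d i) (a i)"
    and "\<forall>i<p. c i < k \<and> a (Suc i mod p) = ins_after (c i) (u i) (b i)"
  shows "\<forall>i<p. d i = c i + 1"
proof (intro allI impI)
  fix i assume ip: "i < p"
  have m: "is_matching V E M" using assms(3) prefix_matching_def by auto
  obtain j where jp: "j < p" "Suc j mod p = i"
  proof (cases i)
    case 0 then show ?thesis using that[of "p - 1"] assms(6) by auto
  next
    case (Suc i') then show ?thesis using that[of i'] ip by auto
  qed
  define D where "D = d i"
  define x where "x = a i"
  define y where "y = b i"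
  define s where "s = Suc (c j)"
  have D: "1 \<le> D" "D + 1 \<le> k" "y = del_at D x" using assms(10) ip unfolding D_def x_def y_def by auto
  have xI: "x \<in> I_kl V E k l" and yI: "y \<in> I_kl V E (k - 1) l" using assms(7) ip x_def y_def by auto
  have xs: "is_seq V x" "length x = Suc k" "seq_len E x = l" using xI unfolding I_kl_def by auto
  have ys: "is_seq V y" "length y = k" "seq_len E y = l" using yI D unfolding I_kl_def by auto
  have bjI: "b j \<in> I_kl V E (k - 1) l" using assms(7) jp by auto
  have lbj: "length (b j) = k" using bjI D unfolding I_kl_def by auto
  have cj: "c j < k" "x = ins_after (c j) (u j) (b j)" using assms(11) jp x_def by auto
  have xbj: "(x, b j) \<in> M" using assms(9) jp x_def by auto
  have "Gamma_edge V E x (b j)" using m xbj unfolding is_matching_def by auto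
  hence cj2: "c j + 2 \<le> k" using ins_end[of V E "c j" "u j" "b j"] cj lbj by auto
  have "del_at s x = b j" using del_ins[of "c j" "b j" "u j"] cj lbj s_def by simp
  hence xst: "state_del M x s" using xbj unfolding state_del_def by simp
  hence xhs: "has_state M x s" unfolding has_state_def by simp
  have sx: "s + 2 \<le> length x" using cj2 xs s_def by simp
  define a' where "a' = a (Suc i mod p)"
  have a'y: "(a', y) \<in> M" "a' = ins_after (c i) (u i) y" "c i < k"
    using assms(9,11) ip a'_def y_def by auto
  have yci: "state_ins M y (c i) (u i)" using a'y unfolding state_ins_def by simp
  have "Gamma_edge V E a' y" using m a'y unfolding is_matching_def by auto
  hence ci2: "c i + 2 \<le> k" using ins_end[of V E "c i" "u i" y] a'y ys by auto
  have yhs: "has_state M y (c i)" using yci unfolding has_state_def by blast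
  show "d i = c i + 1"
  proof (cases "s + 2 \<le> D")
    case True
    have "take (s+2) y = take (s+2) x" using True D(3) take_del by metis
    moreover have "s + 2 \<le> length y" using True D ys by simp
    ultimately have "state_del M y s"
      using assms(3) xs(1) xst ys(1) unfolding prefix_matching_def by blast
    then show ?thesis using del_ins_excl[OF m _ yci] ys a'y by auto
  next
    case False
    have un: "unmatched M (take n y)" if "n \<le> D" for n
    proof -
      have "take n y = take n x" using that D(3) take_del by metis
      moreover have "unmatched M (take n x)"
        using first_prefix[OF assms(3) xs(1) xhs sx, of n] False that by auto
      ultimately show ?thesis by simp
    qed
    define z where "z = take (D+1) y"
    have zs: "is_seq V z" using is_seq_take[OF ys(1)] z_def by simp
    have lz: "length z = D + 1" using z_def ys D by simp
    have bz: "butlast z = take D y" unfolding z_def using ys D by (simp add: butlast_take)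
    have z1: "z ! (length z - 2) = x ! (D - 1)"
      using lz D xs(2) nth_del1[of "D-1" D x] unfolding z_def by simp
    have z2: "last z = x ! Suc D"
    proof -
      have "z \<noteq> []" using lz by auto
      hence "last z = z ! D" using lz by (simp add: last_conv_nth)
      also have "\<dots> = y ! D" unfolding z_def using D ys by simp
      also have "\<dots> = x ! Suc D" using D xs by (simp add: nth_del2)
      finally show ?thesis .
    qed
    have xV: "set x \<subseteq> V" using xs(1) unfolding is_seq_def by auto
    have "Suc (D-1) < length x" using D xs by simp
    hence "x!(D-1) \<noteq> x!Suc(D-1)" using xs(1) unfolding is_seq_def by blast
    hence ne1: "x ! (D-1) \<noteq> x ! D" using D by simp
    have ne2: "x ! D \<noteq> x ! Suc D" using xs D unfolding is_seq_def by auto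
    have inV: "x ! (D-1) \<in> V" "x ! D \<in> V" "x ! Suc D \<in> V" using xV D xs by auto
    have g1: "1 \<le> gdist E (x!(D-1)) (x!D)" using gdist_pos[OF assms(2) inV(1,2) ne1] .
    have g2: "1 \<le> gdist E (x!D) (x!Suc D)" using gdist_pos[OF assms(2) inV(2,3) ne2] .
    have "seq_len E x + gdist E (x!(D-1)) (x!(Suc D)) =
       seq_len E (del_at D x) + gdist E (x!(D-1)) (x!D) + gdist E (x!D) (x!(Suc D))"
      using seq_len_del[of D x E] D xs by simp
    hence "2 \<le> gdist E (x!(D-1)) (x!(Suc D))" using xs(3) ys(3) D(3) g1 g2 by simp
    hence "2 \<le> gdist E (z ! (length z - 2)) (last z)" using z1 z2 by simp
    moreover have "unmatched M (butlast z)" using un bz by simp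
    ultimately have "F z \<noteq> Eps" using assms(5) zs lz D unfolding diagonal_rule_def by auto
    hence "\<not> unmatched M z" using F_matched[OF assms(4) zs] lz D \<open>unmatched M (butlast z)\<close> by auto
    hence le1: "c i + 2 \<le> D + 1"
      using first_prefix[OF assms(3) ys(1) yhs] ci2 ys z_def by auto
    have "has_state M (take (c i + 2) y) (c i)"
      using prefix_state[OF assms(3) ys(1) yhs is_seq_take[OF ys(1)]] ci2 ys by (simp add: min_absorb1)
    hence "\<not> unmatched M (take (c i + 2) y)"
      unfolding has_state_def state_del_def state_ins_def unmatched_def by auto
    hence "\<not> c i + 2 \<le> D" using un by blast
    then show ?thesis using le1 D_def by simp
  qed
qed

end
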